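(* Let $U$ be an infinite uniquely $2$-divisible group, $\nu$ an involutory almost regular automorphism of $U$, and $S=\{x\in U\mid x^\nu=x^{-1}\}$. Let $D$ be an abelian subgroup of $U$ (possibly $D=1$) which is inverted by $\nu$ and such that $C_U(D)$ is infinite, and assume $(S\cap C_U(D))\setminus D\neq\emptyset$. Then: (1) there exists an element $w\in C_U(D)\setminus D$ which is inverted by $\nu$ and such that $C_U(\langle D,w\rangle)$ is infinite; (2) there exists an infinite abelian subgroup of $U$ which is inverted by $\nu$.
   Context: An automorphism $\nu$ is involutory if $\nu\ne\mathrm{id}$ and $\nu^2=\mathrm{id}$, and almost regular if $C_U(\nu)$ is finite. A group is uniquely $2$-divisible if every element has a unique square root. A subgroup is inverted by $\nu$ if each of its elements $x$ satisfies $x^\nu=x^{-1}$. *)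

theory Defs
  imports "HOL-Algebra.Algebra"
begin

definition grp_centralizer :: "('a, 'b) monoid_scheme \<Rightarrow> 'a set \<Rightarrow> 'a set" where
  "grp_centralizer G S = {x \<in> carrier G. \<forall>y\<in>S. monoid.mult G x y = monoid.mult G y x}"

definition fixed_points :: "('a, 'b) monoid_scheme \<Rightarrow> ('a \<Rightarrow> 'a) \<Rightarrow> 'a set" where
  "fixed_points G \<nu> = {x \<in> carrier G. \<nu> x = x}"

definition involutory_aut :: "('a, 'b) monoid_scheme \<Rightarrow> ('a \<Rightarrow> 'a) \<Rightarrow> bool" where
  "involutory_aut G \<nu> \<longleftrightarrow> \<nu> \<in> iso G G \<and> (\<exists>x\<in>carrier G. \<nu> x \<noteq> x)
     \<and> (\<forall>x\<in>carrier G. \<nu> (\<nu> x) = x)"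

definition almost_regular :: "('a, 'b) monoid_scheme \<Rightarrow> ('a \<Rightarrow> 'a) \<Rightarrow> bool" where
  "almost_regular G \<nu> \<longleftrightarrow> finite (fixed_points G \<nu>)"

definition uniquely_2_divisible :: "('a, 'b) monoid_scheme \<Rightarrow> bool" where
  "uniquely_2_divisible G \<longleftrightarrow> (\<forall>x\<in>carrier G. \<exists>!y. y \<in> carrier G \<and> monoid.mult G y y = x)"

definition inverted_by :: "('a, 'b) monoid_scheme \<Rightarrow> ('a \<Rightarrow> 'a) \<Rightarrow> 'a set \<Rightarrow> bool" where
  "inverted_by G \<nu> H \<longleftrightarrow> (\<forall>x\<in>H. \<nu> x = m_inv G x)"

definition abelian_set :: "('a, 'b) monoid_scheme \<Rightarrow> 'a set \<Rightarrow> bool" where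
  "abelian_set G H \<longleftrightarrow> (\<forall>x\<in>H. \<forall>y\<in>H. monoid.mult G x y = monoid.mult G y x)"

end

theory Submission
  imports Defs
begin

locale invset = group G for G :: "('a,'b) monoid_scheme" (structure) +
  fixes nu :: "'a \<Rightarrow> 'a"
  assumes nu_hom: "nu \<in> hom G G"
    and nu_invol: "\<And>x. x \<in> carrier G \<Longrightarrow> nu (nu x) = x"
    and u2: "uniquely_2_divisible G"
    and finfix: "finite (fixed_points G nu)"
begin

lemma gh: "group_hom G G nu"
  using nu_hom by (simp add: group_hom_def group_hom_axioms_def group_axioms)

lemma nu_closed[simp]: "x \<in> carrier G \<Longrightarrow> nu x \<in> carrier G"
  using nu_hom by (auto simp: hom_def)

lemma nu_mult[simp]: "x \<in> carrier G \<Longrightarrow> y \<in> carrier G \<Longrightarrow> nu (x \<otimes> y) = nu x \<otimes> nu y"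
  using group_hom.hom_mult[OF gh] by simp

lemma nu_one[simp]: "nu \<one> = \<one>"
  using group_hom.hom_one[OF gh] by simp

lemma nu_inv[simp]: "x \<in> carrier G \<Longrightarrow> nu (inv x) = inv (nu x)"
  using group_hom.hom_inv[OF gh] by simp

lemma rinv_assoc[simp]: "x \<in> carrier G \<Longrightarrow> y \<in> carrier G \<Longrightarrow> x \<otimes> (inv x \<otimes> y) = y"
  by (simp flip: m_assoc)
lemma linv_assoc[simp]: "x \<in> carrier G \<Longrightarrow> y \<in> carrier G \<Longrightarrow> inv x \<otimes> (x \<otimes> y) = y"
  by (simp flip: m_assoc)

lemma sq_uniq: "x \<in> carrier G \<Longrightarrow> y \<in> carrier G \<Longrightarrow> x \<otimes> x = y \<otimes> y \<Longrightarrow> x = y"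
  using u2 unfolding uniquely_2_divisible_def by (metis m_closed)

lemma sq_ex: "x \<in> carrier G \<Longrightarrow> \<exists>y\<in>carrier G. y \<otimes> y = x"
  using u2 unfolding uniquely_2_divisible_def by blast

lemma root_inv: assumes "r \<in> carrier G" "nu (r \<otimes> r) = inv (r \<otimes> r)" shows "nu r = inv r"
proof -
  have "nu r \<otimes> nu r = nu (r \<otimes> r)" using assms(1) by simp
  also have "\<dots> = inv (r \<otimes> r)" by (rule assms(2))
  also have "\<dots> = inv r \<otimes> inv r" using assms(1) by (simp add: inv_mult_group)
  finally have "nu r \<otimes> nu r = inv r \<otimes> inv r" .
  thus ?thesis using sq_uniq[of "nu r" "inv r"] assms(1) by simp
qed

lemma root_comm: assumes "d \<in> carrier G" "r \<in> carrier G" "d \<otimes> (r \<otimes> r) = (r \<otimes> r) \<otimes> d"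
  shows "d \<otimes> r = r \<otimes> d"
proof -
  have "(d \<otimes> r \<otimes> inv d) \<otimes> (d \<otimes> r \<otimes> inv d) = d \<otimes> (r \<otimes> r) \<otimes> inv d"
    using assms(1,2) by (simp add: m_assoc)
  also have "\<dots> = (r \<otimes> r) \<otimes> d \<otimes> inv d" using assms by simp
  also have "\<dots> = r \<otimes> r" using assms by (simp add: m_assoc)
  finally have "d \<otimes> r \<otimes> inv d = r" using sq_uniq[of "d \<otimes> r \<otimes> inv d" r] assms(1,2) by simp
  thus ?thesis using assms by (metis inv_solve_right' m_closed)
qed

lemma comm_inv_left: assumes "x \<in> carrier G" "z \<in> carrier G" "x \<otimes> z = z \<otimes> x"
  shows "inv x \<otimes> z = z \<otimes> inv x"
proof -
  have "inv x \<otimes> z = inv x \<otimes> (z \<otimes> x) \<otimes> inv x" using assms(1,2) by (simp add: m_assoc)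
  also have "\<dots> = inv x \<otimes> (x \<otimes> z) \<otimes> inv x" using assms(3) by simp
  also have "\<dots> = z \<otimes> inv x" using assms(1,2) by (simp add: m_assoc)
  finally show ?thesis .
qed

lemma comm_inv: assumes "x \<in> carrier G" "a \<in> carrier G" "x \<otimes> inv a = inv a \<otimes> x"
  shows "x \<otimes> a = a \<otimes> x"
  using comm_inv_left[of "inv a" x] assms by simp

abbreviation "SS \<equiv> {x \<in> carrier G. nu x = inv x}"
abbreviation "cen \<equiv> grp_centralizer G"

lemma cen_iff: "x \<in> cen W \<longleftrightarrow> x \<in> carrier G \<and> (\<forall>y\<in>W. x \<otimes> y = y \<otimes> x)"
  unfolding grp_centralizer_def by simp

lemma cen_mult: assumes "W \<subseteq> carrier G" "x \<in> cen W" "y \<in> cen W" shows "x \<otimes> y \<in> cen W"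
proof -
  have "\<forall>z\<in>W. x \<otimes> y \<otimes> z = z \<otimes> (x \<otimes> y)"
  proof
    fix z assume z: "z \<in> W"
    have c: "x \<in> carrier G" "y \<in> carrier G" "z \<in> carrier G" using assms z cen_iff by auto
    have "x \<otimes> y \<otimes> z = x \<otimes> (z \<otimes> y)" using assms z c by (simp add: m_assoc cen_iff)
    also have "\<dots> = (x \<otimes> z) \<otimes> y" using c by (simp add: m_assoc)
    also have "\<dots> = z \<otimes> x \<otimes> y" using assms z c by (simp add: cen_iff)
    finally show "x \<otimes> y \<otimes> z = z \<otimes> (x \<otimes> y)" using c by (simp add: m_assoc)
  qed
  thus ?thesis using assms by (simp add: cen_iff)
qed

lemma cen_inv: assumes "W \<subseteq> carrier G" "x \<in> cen W" shows "inv x \<in> cen W"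
proof -
  have "\<forall>z\<in>W. inv x \<otimes> z = z \<otimes> inv x"
  proof
    fix z assume z: "z \<in> W"
    have c: "x \<in> carrier G" "z \<in> carrier G" "x \<otimes> z = z \<otimes> x" using assms z cen_iff by auto
    show "inv x \<otimes> z = z \<otimes> inv x" using c comm_inv_left by simp
  qed
  thus ?thesis using assms by (simp add: cen_iff)
qed

lemma cen_one: "W \<subseteq> carrier G \<Longrightarrow> \<one> \<in> cen W"
  unfolding grp_centralizer_def by auto

lemma cen_generate: assumes "W \<subseteq> carrier G" "x \<in> cen W" shows "x \<in> cen (generate G W)"
proof -
  have xc: "x \<in> carrier G" using assms cen_iff by auto
  have "h \<in> generate G W \<Longrightarrow> x \<otimes> h = h \<otimes> x" for h
  proof (induction rule: generate.induct)
    case one then show ?case using xc by simp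
  next
    case (incl h) then show ?case using assms cen_iff by auto
  next
    case (inv h)
    have "h \<in> carrier G" "x \<otimes> h = h \<otimes> x" using inv assms cen_iff by auto
    then show ?case using comm_inv_left[of h x] xc by simp
  next
    case (eng h1 h2)
    have c: "h1 \<in> carrier G" "h2 \<in> carrier G"
      using eng.hyps generate_in_carrier[OF assms(1)] by auto
    have "x \<otimes> (h1 \<otimes> h2) = h1 \<otimes> x \<otimes> h2" using eng.IH c xc by (simp flip: m_assoc)
    also have "\<dots> = h1 \<otimes> h2 \<otimes> x" using eng.IH c xc by (simp add: m_assoc)
    finally show ?case .
  qed
  thus ?thesis using xc by (simp add: cen_iff)
qed

lemma cen_sym: "x \<in> cen W \<Longrightarrow> y \<in> W \<Longrightarrow> y \<in> carrier G \<Longrightarrow> y \<in> cen {x}"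
  by (auto simp: cen_iff)

lemma abel_generate: assumes "W \<subseteq> carrier G" "abelian_set G W" shows "abelian_set G (generate G W)"
proof -
  have "W \<subseteq> cen W" using assms by (auto simp: cen_iff abelian_set_def)
  then have "W \<subseteq> cen (generate G W)" using cen_generate assms by auto
  then have "\<forall>y\<in>W. \<forall>x\<in>generate G W. y \<otimes> x = x \<otimes> y" by (auto simp: cen_iff)
  then have "generate G W \<subseteq> cen W"
    using generate_in_carrier[OF assms(1)] by (auto simp: cen_iff)
  then have "generate G W \<subseteq> cen (generate G W)" using cen_generate assms by auto
  thus ?thesis by (auto simp: cen_iff abelian_set_def)
qed

lemma inv_generate: assumes "W \<subseteq> carrier G" "abelian_set G W" "inverted_by G nu W"
  shows "inverted_by G nu (generate G W)"
proof -
  have ab: "abelian_set G (generate G W)" using abel_generate assms by simp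
  have gc: "generate G W \<subseteq> carrier G" using generate_in_carrier[OF assms(1)] by auto
  have "h \<in> generate G W \<Longrightarrow> nu h = inv h" for h
  proof (induction rule: generate.induct)
    case one then show ?case by simp
  next
    case (incl h) then show ?case using assms by (auto simp: inverted_by_def)
  next
    case (inv h) then show ?case using assms by (auto simp: inverted_by_def)
  next
    case (eng h1 h2)
    have c: "h1 \<in> carrier G" "h2 \<in> carrier G" using eng.hyps gc by auto
    have "nu (h1 \<otimes> h2) = inv h1 \<otimes> inv h2" using eng.IH c by simp
    also have "\<dots> = inv (h2 \<otimes> h1)" using c by (simp add: inv_mult_group)
    also have "\<dots> = inv (h1 \<otimes> h2)" using ab eng.hyps by (simp add: abelian_set_def)
    finally show ?case .
  qed
  thus ?thesis by (simp add: inverted_by_def)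
qed

lemma nu_cen: assumes "W \<subseteq> carrier G" "inverted_by G nu W" "x \<in> cen W" shows "nu x \<in> cen W"
proof -
  have "\<forall>d\<in>W. nu x \<otimes> d = d \<otimes> nu x"
  proof
    fix d assume d: "d \<in> W"
    have c: "x \<in> carrier G" "d \<in> carrier G" "x \<otimes> d = d \<otimes> x" using assms d cen_iff by auto
    have "nu x \<otimes> nu d = nu d \<otimes> nu x" using c by (metis nu_mult)
    moreover have "nu d = inv d" using d assms(2) by (simp add: inverted_by_def)
    ultimately have "nu x \<otimes> inv d = inv d \<otimes> nu x" by simp
    thus "nu x \<otimes> d = d \<otimes> nu x" using comm_inv c by simp
  qed
  thus ?thesis using assms by (simp add: cen_iff)
qed

lemma root_cen: assumes "W \<subseteq> carrier G" "r \<in> carrier G" "r \<otimes> r \<in> cen W" shows "r \<in> cen W"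
proof -
  have "\<forall>y\<in>W. r \<otimes> y = y \<otimes> r"
  proof
    fix y assume y: "y \<in> W"
    then have yc: "y \<in> carrier G" using assms by auto
    have "y \<otimes> (r \<otimes> r) = (r \<otimes> r) \<otimes> y" using assms y by (simp add: cen_iff)
    then have "y \<otimes> r = r \<otimes> y" using root_comm[OF yc assms(2)] by simp
    thus "r \<otimes> y = y \<otimes> r" by simp
  qed
  thus ?thesis using assms by (simp add: cen_iff)
qed

lemma decomp: assumes "W \<subseteq> carrier G" "inverted_by G nu W" "g \<in> cen W"
  shows "\<exists>c\<in>fixed_points G nu. inv c \<otimes> g \<in> SS \<inter> cen W"
proof -
  have gc: "g \<in> carrier G" using assms cen_iff by auto
  let ?p = "inv g \<otimes> nu g"
  have pc: "?p \<in> cen W" using assms cen_mult cen_inv nu_cen by simp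
  obtain q where q: "q \<in> carrier G" "q \<otimes> q = ?p" using sq_ex gc by (meson inv_closed m_closed nu_closed)
  have "nu (q \<otimes> q) = inv (nu g) \<otimes> g" using q gc nu_invol by simp
  moreover have "inv (q \<otimes> q) = inv (nu g) \<otimes> g" using q gc by (simp add: inv_mult_group)
  ultimately have e: "nu (q \<otimes> q) = inv (q \<otimes> q)" by simp
  have qi: "nu q = inv q" using root_inv[OF q(1) e] .
  have qW: "q \<in> cen W" using root_cen q pc assms by simp
  have cfix: "g \<otimes> q \<in> fixed_points G nu"
  proof -
    have "nu (g \<otimes> q) = nu g \<otimes> inv q" using q gc qi by simp
    also have "\<dots> = g \<otimes> q"
    proof -
      have "g \<otimes> (q \<otimes> q) = nu g" using q gc by (simp flip: m_assoc)
      then have "g \<otimes> q = nu g \<otimes> inv q" using q gc by (metis inv_solve_right m_assoc m_closed nu_closed)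
      thus ?thesis by simp
    qed
    finally show ?thesis using q gc by (simp add: fixed_points_def)
  qed
  have "inv (g \<otimes> q) \<otimes> g = inv q" using q gc by (simp add: inv_mult_group m_assoc)
  moreover have "inv q \<in> SS \<inter> cen W" using q qi qW cen_inv assms by simp
  ultimately show ?thesis using cfix by metis
qed

lemma core:
  assumes D: "subgroup D G" "abelian_set G D" "inverted_by G nu D" "infinite (cen D)" "finite D"
  shows "\<exists>w\<in>cen D - D. nu w = inv w \<and> infinite (cen (generate G (D \<union> {w})))"
proof -
  have Dc: "D \<subseteq> carrier G" using D(1) subgroup.subset by blast
  let ?V = "cen D"
  let ?F = "fixed_points G nu"
  have Fc: "?F \<subseteq> carrier G" by (auto simp: fixed_points_def)
  have Vc: "?V \<subseteq> carrier G" by (auto simp: cen_iff)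
  have dec: "\<forall>g\<in>?V. \<exists>c\<in>?F. inv c \<otimes> g \<in> SS \<inter> ?V" using decomp[OF Dc D(3)] by blast
  have SVinf: "infinite (SS \<inter> ?V)"
  proof
    assume fin: "finite (SS \<inter> ?V)"
    have "?V \<subseteq> (\<lambda>(c,s). c \<otimes> s) ` (?F \<times> (SS \<inter> ?V))"
    proof
      fix g assume g: "g \<in> ?V"
      then obtain c where c: "c \<in> ?F" "inv c \<otimes> g \<in> SS \<inter> ?V" using dec by blast
      have "c \<in> carrier G" "g \<in> carrier G" using c g Fc Vc by auto
      then have "g = c \<otimes> (inv c \<otimes> g)" by simp
      thus "g \<in> (\<lambda>(c,s). c \<otimes> s) ` (?F \<times> (SS \<inter> ?V))" using c by force
    qed
    moreover have "finite ((\<lambda>(c,s). c \<otimes> s) ` (?F \<times> (SS \<inter> ?V)))" using fin finfix by simp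
    ultimately show False using D(4) finite_subset by blast
  qed
  have "finite ((\<lambda>(c,d). c \<otimes> d) ` (?F \<times> D))" using D(5) finfix by simp
  then have "\<not> ?V \<subseteq> (\<lambda>(c,d). c \<otimes> d) ` (?F \<times> D)" using D(4) finite_subset by blast
  then obtain u where u: "u \<in> ?V" "u \<notin> (\<lambda>(c,d). c \<otimes> d) ` (?F \<times> D)" by blast
  have uc: "u \<in> carrier G" using u Vc by auto
  have dec2: "\<forall>g\<in>?V. \<exists>c. c \<in> ?F \<and> inv c \<otimes> g \<in> SS \<inter> ?V" using dec unfolding Bex_def .
  from bchoice[OF dec2] obtain cf where cf: "\<forall>g\<in>?V. cf g \<in> ?F \<and> inv (cf g) \<otimes> g \<in> SS \<inter> ?V" ..
  have uyV: "\<forall>y \<in> SS \<inter> ?V. u \<otimes> y \<in> ?V" by (auto intro: cen_mult[OF Dc u(1)])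
  let ?f = "\<lambda>y. cf (u \<otimes> y)"
  have "?f ` (SS \<inter> ?V) \<subseteq> ?F" using cf uyV by auto
  then have fin: "finite (?f ` (SS \<inter> ?V))" using finfix finite_subset by blast
  obtain y0 where y0: "y0 \<in> SS \<inter> ?V" and Yinf0: "infinite {y \<in> SS \<inter> ?V. ?f y = ?f y0}"
    using pigeonhole_infinite[OF SVinf fin] by blast
  define Y where "Y = {y \<in> SS \<inter> ?V. ?f y = ?f y0}"
  define c where "c = ?f y0"
  define a where "a = inv c \<otimes> u"
  have Yinf: "infinite Y" using Yinf0 Y_def by simp
  have YS: "\<And>y. y \<in> Y \<Longrightarrow> y \<in> carrier G \<and> nu y = inv y \<and> y \<in> ?V" using Y_def by auto
  have cF: "c \<in> ?F" using cf uyV y0 c_def by auto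
  have cc: "c \<in> carrier G" using cF Fc by auto
  have ac: "a \<in> carrier G" using a_def cc uc by simp
  have aY: "\<And>y. y \<in> Y \<Longrightarrow> a \<otimes> y \<in> SS \<inter> ?V"
  proof -
    fix y assume y: "y \<in> Y"
    have m: "u \<otimes> y \<in> ?V" using uyV y Y_def by auto
    have e1: "cf (u \<otimes> y) = c" using y Y_def c_def by auto
    have i1: "inv (cf (u \<otimes> y)) \<otimes> (u \<otimes> y) \<in> SS \<inter> ?V" using cf m by blast
    have e2: "a \<otimes> y = inv (cf (u \<otimes> y)) \<otimes> (u \<otimes> y)"
      using e1 a_def cc uc YS[OF y] by (simp add: m_assoc)
    show "a \<otimes> y \<in> SS \<inter> ?V" unfolding e2 by (rule i1)
  qed
  have y0Y: "y0 \<in> Y" using y0 Y_def by simp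
  have y0c: "y0 \<in> carrier G" using YS y0Y by blast
  have aV: "a \<in> ?V"
  proof -
    have "a = (a \<otimes> y0) \<otimes> inv y0" using ac y0c by (simp add: m_assoc)
    moreover have "(a \<otimes> y0) \<otimes> inv y0 \<in> ?V" using aY[OF y0Y] YS[OF y0Y] cen_mult cen_inv Dc by simp
    ultimately show ?thesis by simp
  qed
  have aD: "a \<notin> D"
  proof
    assume "a \<in> D"
    moreover have "u = c \<otimes> a" using a_def cc uc by simp
    ultimately have "u \<in> (\<lambda>(c,d). c \<otimes> d) ` (?F \<times> D)" using cF by force
    thus False using u by simp
  qed
  have key: "\<And>y. y \<in> Y \<Longrightarrow> nu a = inv y \<otimes> inv a \<otimes> y"
  proof -
    fix y assume y: "y \<in> Y"
    have yc: "y \<in> carrier G" "nu y = inv y" using YS[OF y] by auto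
    have "nu (a \<otimes> y) = inv (a \<otimes> y)" using aY[OF y] by simp
    then have "nu a \<otimes> inv y = inv y \<otimes> inv a" using yc ac by (simp add: inv_mult_group)
    moreover have "nu a = (nu a \<otimes> inv y) \<otimes> y" using yc ac by (simp add: m_assoc)
    ultimately show "nu a = inv y \<otimes> inv a \<otimes> y" by simp
  qed
  have comm: "\<And>y. y \<in> Y \<Longrightarrow> (y0 \<otimes> inv y) \<otimes> a = a \<otimes> (y0 \<otimes> inv y)"
  proof -
    fix y assume y: "y \<in> Y"
    have yc: "y \<in> carrier G" using YS[OF y] by auto
    have "(y0 \<otimes> inv y) \<otimes> inv a = y0 \<otimes> (inv y \<otimes> inv a \<otimes> y) \<otimes> inv y"
      using yc y0c ac by (simp add: m_assoc)
    also have "\<dots> = y0 \<otimes> (inv y0 \<otimes> inv a \<otimes> y0) \<otimes> inv y" using key[OF y] key[OF y0Y] by simp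
    also have "\<dots> = inv a \<otimes> (y0 \<otimes> inv y)" using yc y0c ac by (simp add: m_assoc)
    finally have "(y0 \<otimes> inv y) \<otimes> inv a = inv a \<otimes> (y0 \<otimes> inv y)" .
    then show "(y0 \<otimes> inv y) \<otimes> a = a \<otimes> (y0 \<otimes> inv y)" using comm_inv[of "y0 \<otimes> inv y" a] yc y0c ac by simp
  qed
  obtain r where r: "r \<in> carrier G" "r \<otimes> r = y0" using sq_ex y0c by blast
  have "nu (r \<otimes> r) = inv (r \<otimes> r)" using r(2) YS[OF y0Y] by simp
  then have ri: "nu r = inv r" using root_inv[OF r(1)] by blast
  have "r \<otimes> r \<in> ?V" using r(2) YS[OF y0Y] by simp
  then have rV: "r \<in> ?V" using root_cen[OF Dc r(1)] by blast
  define w where "w = inv r \<otimes> a \<otimes> r"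
  have wc: "w \<in> carrier G" using w_def r ac by simp
  have wV: "w \<in> ?V" using w_def rV aV cen_mult cen_inv Dc by simp
  have wi: "nu w = inv w"
  proof -
    have "nu w = r \<otimes> nu a \<otimes> inv r" using w_def r ac ri by simp
    also have "\<dots> = r \<otimes> (inv (r \<otimes> r) \<otimes> inv a \<otimes> (r \<otimes> r)) \<otimes> inv r"
      using key[OF y0Y] r by simp
    also have "\<dots> = inv r \<otimes> inv a \<otimes> r" using r(1) ac by (simp add: m_assoc inv_mult_group)
    also have "\<dots> = inv w" using w_def r ac by (simp add: m_assoc inv_mult_group)
    finally show ?thesis .
  qed
  have wD: "w \<notin> D"
  proof
    assume wD: "w \<in> D"
    have "r \<otimes> w = w \<otimes> r" using rV wD by (simp add: cen_iff)
    moreover have "r \<otimes> w = a \<otimes> r" using w_def r ac by (simp add: m_assoc)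
    ultimately have "a = w" using r ac wc by simp
    thus False using aD wD by simp
  qed
  define z where "z = (\<lambda>y. inv r \<otimes> (y0 \<otimes> inv y) \<otimes> r)"
  have DWc: "D \<union> {w} \<subseteq> carrier G" using Dc wc by simp
  have zcen: "\<And>y. y \<in> Y \<Longrightarrow> z y \<in> cen (generate G (D \<union> {w}))"
  proof -
    fix y assume y: "y \<in> Y"
    have yc: "y \<in> carrier G" "y \<in> ?V" using YS[OF y] by auto
    have zV: "z y \<in> ?V" using z_def rV yc y0 cen_mult cen_inv Dc by simp
    have zc: "z y \<in> carrier G" using zV Vc by auto
    have e: "(y0 \<otimes> inv y) \<otimes> a = a \<otimes> (y0 \<otimes> inv y)" using comm[OF y] .
    have "z y \<otimes> w = inv r \<otimes> ((y0 \<otimes> inv y) \<otimes> a \<otimes> r)" using z_def w_def r yc y0c ac by (simp add: m_assoc)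
    also have "\<dots> = inv r \<otimes> (a \<otimes> (y0 \<otimes> inv y) \<otimes> r)" by (simp only: e)
    also have "\<dots> = w \<otimes> z y" using z_def w_def r yc y0c ac by (simp add: m_assoc)
    finally have "z y \<otimes> w = w \<otimes> z y" .
    then have "z y \<in> cen (D \<union> {w})" using zV zc by (auto simp: cen_iff)
    thus "z y \<in> cen (generate G (D \<union> {w}))" using cen_generate DWc by simp
  qed
  have zinj: "inj_on z Y"
  proof
    fix y y' assume y: "y \<in> Y" and y': "y' \<in> Y" and eq: "z y = z y'"
    have yc: "y \<in> carrier G" "y' \<in> carrier G" using YS y y' by auto
    from eq have "inv y = inv y'" using z_def r yc y0c by simp
    thus "y = y'" using yc by (metis inv_inv)
  qed
  have "infinite (z ` Y)" using zinj Yinf finite_imageD by blast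
  moreover have "z ` Y \<subseteq> cen (generate G (D \<union> {w}))" using zcen by auto
  ultimately have "infinite (cen (generate G (D \<union> {w})))" using finite_subset by blast
  thus ?thesis using wV wD wi by blast
qed

end

theorem lemma3p1:
  fixes G :: "('a, 'b) monoid_scheme" and \<nu> :: "'a \<Rightarrow> 'a" and D :: "'a set"
  assumes "group G"
    and "infinite (carrier G)"
    and "uniquely_2_divisible G"
    and "involutory_aut G \<nu>"
    and "almost_regular G \<nu>"
    and "subgroup D G"
    and "abelian_set G D"
    and "inverted_by G \<nu> D"
    and "infinite (grp_centralizer G D)"
    and "({x \<in> carrier G. \<nu> x = inv\<^bsub>G\<^esub> x} \<inter> grp_centralizer G D) - D \<noteq> {}"
  shows "(\<exists>w \<in> grp_centralizer G D - D. \<nu> w = inv\<^bsub>G\<^esub> w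
            \<and> infinite (grp_centralizer G (generate G (D \<union> {w}))))
       \<and> (\<exists>A. subgroup A G \<and> abelian_set G A \<and> infinite A \<and> inverted_by G \<nu> A)"
proof -
  have hom: "\<nu> \<in> hom G G" using assms(4) by (auto simp: involutory_aut_def iso_def)
  interpret I: invset G \<nu>
    apply (rule invset.intro[OF assms(1)])
    apply (rule invset_axioms.intro)
    using hom assms(3,4,5) by (auto simp: involutory_aut_def almost_regular_def)
  have Dc: "D \<subseteq> carrier G" using assms(6) subgroup.subset by blast
  have part1: "\<exists>w \<in> grp_centralizer G D - D. \<nu> w = inv\<^bsub>G\<^esub> w
            \<and> infinite (grp_centralizer G (generate G (D \<union> {w})))"
  proof (cases "finite D")
    case True
    then show ?thesis using I.core assms(6-9) by blast
  next
    case False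
    obtain s where s: "s \<in> carrier G" "\<nu> s = inv\<^bsub>G\<^esub> s" "s \<in> grp_centralizer G D" "s \<notin> D"
      using assms(10) by blast
    have "D \<subseteq> grp_centralizer G (D \<union> {s})"
    proof
      fix d assume d: "d \<in> D"
      have "d \<in> carrier G" using d Dc by auto
      moreover have "\<forall>y\<in>D. d \<otimes>\<^bsub>G\<^esub> y = y \<otimes>\<^bsub>G\<^esub> d" using d assms(7) by (auto simp: abelian_set_def)
      moreover have "d \<otimes>\<^bsub>G\<^esub> s = s \<otimes>\<^bsub>G\<^esub> d" using s(3) d by (auto simp: I.cen_iff)
      ultimately show "d \<in> grp_centralizer G (D \<union> {s})" by (auto simp: I.cen_iff)
    qed
    then have "D \<subseteq> grp_centralizer G (generate G (D \<union> {s}))"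
      using I.cen_generate[of "D \<union> {s}"] Dc s(1) by auto
    then have "infinite (grp_centralizer G (generate G (D \<union> {s})))"
      using False finite_subset by blast
    then show ?thesis using s by blast
  qed
  have part2: "\<exists>A. subgroup A G \<and> abelian_set G A \<and> infinite A \<and> inverted_by G \<nu> A"
  proof (rule ccontr)
    assume H: "\<not> (\<exists>A. subgroup A G \<and> abelian_set G A \<and> infinite A \<and> inverted_by G \<nu> A)"
    define P where "P Xs \<longleftrightarrow> subgroup Xs G \<and> abelian_set G Xs \<and> inverted_by G \<nu> Xs
        \<and> infinite (grp_centralizer G Xs) \<and> finite Xs" for Xs
    have step: "\<exists>Y. P Y \<and> Xs \<subset> Y" if PX: "P Xs" for Xs
    proof -
      have Xs: "subgroup Xs G" "abelian_set G Xs" "inverted_by G \<nu> Xs" "infinite (grp_centralizer G Xs)" "finite Xs"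
        using PX P_def by auto
      have Xc: "Xs \<subseteq> carrier G" using Xs(1) subgroup.subset by blast
      obtain w where w: "w \<in> grp_centralizer G Xs - Xs" "\<nu> w = inv\<^bsub>G\<^esub> w"
        "infinite (grp_centralizer G (generate G (Xs \<union> {w})))" using I.core[OF Xs] by blast
      have wc: "w \<in> carrier G" using w(1) by (auto simp: I.cen_iff)
      have XWc: "Xs \<union> {w} \<subseteq> carrier G" using Xc wc by auto
      have ab: "abelian_set G (Xs \<union> {w})"
      proof -
        have "w \<in> carrier G \<and> (\<forall>y\<in>Xs. w \<otimes>\<^bsub>G\<^esub> y = y \<otimes>\<^bsub>G\<^esub> w)" using w(1) I.cen_iff by blast
        thus ?thesis using Xs(2) unfolding abelian_set_def by auto
      qed
      have iv: "inverted_by G \<nu> (Xs \<union> {w})" using Xs(3) w(2) by (auto simp: inverted_by_def)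
      let ?Y = "generate G (Xs \<union> {w})"
      have Ysub: "subgroup ?Y G" using I.generate_is_subgroup[OF XWc] .
      have Yab: "abelian_set G ?Y" using I.abel_generate[OF XWc ab] .
      have Yiv: "inverted_by G \<nu> ?Y" using I.inv_generate[OF XWc ab iv] .
      have Yfin: "finite ?Y" using H Ysub Yab Yiv by blast
      have "Xs \<union> {w} \<subseteq> ?Y" by (auto intro: generate.incl)
      then have "Xs \<subset> ?Y" using w(1) by auto
      thus ?thesis using Ysub Yab Yiv Yfin w(3) P_def by blast
    qed
    have P0: "P {\<one>\<^bsub>G\<^esub>}"
    proof -
      have "grp_centralizer G {\<one>\<^bsub>G\<^esub>} = carrier G" by (auto simp: I.cen_iff)
      thus ?thesis unfolding P_def using I.triv_subgroup assms(2)
        by (auto simp: abelian_set_def inverted_by_def)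
    qed
    define F where "F = rec_nat {\<one>\<^bsub>G\<^esub>} (\<lambda>n Xs. SOME Y. P Y \<and> Xs \<subset> Y)"
    have F0: "F 0 = {\<one>\<^bsub>G\<^esub>}" by (simp add: F_def)
    have FS: "F (Suc n) = (SOME Y. P Y \<and> F n \<subset> Y)" for n by (simp add: F_def)
    have FP: "P (F n)" for n
    proof (induction n)
      case 0 then show ?case using F0 P0 by simp
    next
      case (Suc n)
      show ?case unfolding FS using someI_ex[OF step[OF Suc.IH]] by blast
    qed
    have Fsub: "F n \<subset> F (Suc n)" for n
      unfolding FS using someI_ex[OF step[OF FP[of n]]] by blast
    have Fmono: "m \<le> n \<Longrightarrow> F m \<subseteq> F n" for m n
      using lift_Suc_mono_le[of F] Fsub by (meson psubset_imp_subset)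
    have Fcard: "n \<le> card (F n)" for n
    proof (induction n)
      case 0 then show ?case by simp
    next
      case (Suc n)
      have "finite (F (Suc n))" using FP[of "Suc n"] unfolding P_def by simp
      then have "card (F n) < card (F (Suc n))" using psubset_card_mono[OF _ Fsub[of n]] by simp
      then show ?case using Suc.IH by simp
    qed
    define UU where "UU = (\<Union>n. F n)"
    have UUinf: "infinite UU"
    proof
      assume fin: "finite UU"
      have "F (Suc (card UU)) \<subseteq> UU" using UU_def by auto
      then have "card (F (Suc (card UU))) \<le> card UU" using card_mono fin by blast
      thus False using Fcard[of "Suc (card UU)"] by simp
    qed
    have UUc: "UU \<subseteq> carrier G"
    proof
      fix x assume "x \<in> UU"
      then obtain i where "x \<in> F i" using UU_def by auto
      moreover have "subgroup (F i) G" using FP[of i] unfolding P_def by simp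
      ultimately show "x \<in> carrier G" using subgroup.subset by blast
    qed
    have UUab: "abelian_set G UU" unfolding abelian_set_def
    proof (intro ballI)
      fix x y assume "x \<in> UU" "y \<in> UU"
      then obtain i j where ij: "x \<in> F i" "y \<in> F j" using UU_def by auto
      then have "x \<in> F (max i j)" "y \<in> F (max i j)" using Fmono[of i "max i j"] Fmono[of j "max i j"] by auto
      moreover have "abelian_set G (F (max i j))" using FP[of "max i j"] unfolding P_def by simp
      ultimately show "x \<otimes>\<^bsub>G\<^esub> y = y \<otimes>\<^bsub>G\<^esub> x" unfolding abelian_set_def by blast
    qed
    have UUiv: "inverted_by G \<nu> UU" unfolding inverted_by_def
    proof
      fix x assume "x \<in> UU"
      then obtain i where "x \<in> F i" using UU_def by auto
      moreover have "inverted_by G \<nu> (F i)" using FP[of i] unfolding P_def by simp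
      ultimately show "\<nu> x = inv\<^bsub>G\<^esub> x" unfolding inverted_by_def by blast
    qed
    have "subgroup (generate G UU) G" using I.generate_is_subgroup[OF UUc] .
    moreover have "abelian_set G (generate G UU)" using I.abel_generate[OF UUc UUab] .
    moreover have "inverted_by G \<nu> (generate G UU)" using I.inv_generate[OF UUc UUab UUiv] .
    moreover have "infinite (generate G UU)"
      using UUinf finite_subset[of UU "generate G UU"] generate.incl[of _ UU G] by blast
    ultimately show False using H by blast
  qed
  show ?thesis using part1 part2 by blast
qed

end
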